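(* Let $q$ be a prime power, let $n,m\ge 1$ and $k$ be integers with $k^m\equiv 1 \pmod n$ and $k^t\not\equiv 1\pmod n$ for $1\le t\le m-1$, and let $$G_1=\langle x,y\mid x^m=y^n=1,\ x^{-1}yx=y^k\rangle .$$ Order the $mn$ elements of $G_1$ so that the element $x^jy^i$ ($0\le i\le n-1$, $0\le j\le m-1$) is in position $1+i+nj$, and identify $\mathbb{F}_qG_1$ with $\mathbb{F}_q^{mn}$ via $\Psi$ with respect to this ordering. Let $v\in\mathbb{F}_qG_1$ and let $C(v)\subseteq\mathbb{F}_q^{mn}$ be the code generated by the rows of $\sigma_{G_1}(v)$. Suppose $(b_1,b_2,\dots,b_{mn})\in C(v)$. For $0\le j\le m-1$ put $\mathbf{b}_{j+1}'=(b_{1+nj},b_{2+nj},\dots,b_{n+nj})\in\mathbb{F}_q^n$ and $\mathbf{b}_{j+1}=T_n^{[k^j]_n}(\mathbf{b}_{j+1}')$. Then the concatenations $(\mathbf{b}_1,\mathbf{b}_2,\dots,\mathbf{b}_m)$ and $T_m(\mathbf{b}_1',\mathbf{b}_2',\dots,\mathbf{b}_m')=(\mathbf{b}_m',\mathbf{b}_1',\dots,\mathbf{b}_{m-1}')$ are also codewords of $C(v)$.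
   Context: For a finite group $G=\{g_1,\dots,g_N\}$ with a fixed ordering, $\mathbb{F}_qG$ is the group ring, and $\Psi:\mathbb{F}_qG\to\mathbb{F}_q^N$ sends $v=\sum_{i}\alpha_{g_i}g_i$ to $(\alpha_{g_1},\dots,\alpha_{g_N})$. The group ring matrix $\sigma_G(v)$ is the $N\times N$ matrix whose $(i,j)$ entry is $\alpha_{g_i^{-1}g_j}$; $C(v)$ denotes the row space of $\sigma_G(v)$. For a tuple $(c_1,\dots,c_r)$ (of scalars or of vectors), $T_r(c_1,\dots,c_r)=(c_r,c_1,\dots,c_{r-1})$ is the cyclic shift, and $T_r^s$ is its $s$-th iterate. For integers $a$ and $n\ge1$, $[a]_n$ denotes the smallest positive integer $a'$ with $a\equiv a'\pmod n$. *)

theory Defs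
  imports "Jordan_Normal_Form.Matrix" "HOL-Algebra.Group" "HOL-Number_Theory.Cong"
begin

text \<open>Concrete model of the metacyclic group
  G1 = <x,y | x^m = y^n = 1, x^-1 y x = y^k>:
  the pair (i,j) with i < n, j < m stands for the element x^j y^i.
  Since y x = x y^k we have (x^j y^i)(x^j' y^i') = x^(j+j') y^(i k^j' + i').\<close>

definition G1 :: "nat \<Rightarrow> nat \<Rightarrow> int \<Rightarrow> (nat \<times> nat) monoid" where
  "G1 n m k = \<lparr> carrier = {(i, j). i < n \<and> j < m},
      mult = (\<lambda>(i, j) (i', j'). (nat ((int i * k ^ j' + int i') mod int n), (j + j') mod m)),
      one = (0, 0) \<rparr>"

text \<open>The ordering of G1: 0-based position p corresponds to x^(p div n) y^(p mod n),
  i.e. x^j y^i is at (1-based) position 1 + i + n j.\<close>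

definition G1_elem :: "nat \<Rightarrow> nat \<Rightarrow> nat \<times> nat" where
  "G1_elem n p = (p mod n, p div n)"

text \<open>Group ring matrix sigma_G(v) for a group G with ordering g_0,...,g_(N-1);
  the element v of F_q G is given by its coefficient function alpha.\<close>

definition group_ring_matrix ::
  "('g, 'b) monoid_scheme \<Rightarrow> (nat \<Rightarrow> 'g) \<Rightarrow> nat \<Rightarrow> ('g \<Rightarrow> 'a) \<Rightarrow> 'a mat" where
  "group_ring_matrix G g N alpha =
     mat N N (\<lambda>(a, b). alpha (inv\<^bsub>G\<^esub> (g a) \<otimes>\<^bsub>G\<^esub> (g b)))"

definition row_space :: "'a::comm_ring_1 mat \<Rightarrow> 'a vec set" where
  "row_space A = {transpose_mat A *\<^sub>v c | c. c \<in> carrier_vec (dim_row A)}"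

definition Tshift :: "'x list \<Rightarrow> 'x list" where
  "Tshift xs = (if xs = [] then [] else last xs # butlast xs)"

definition Tvec :: "'a vec \<Rightarrow> 'a vec" where
  "Tvec c = vec_of_list (Tshift (list_of_vec c))"

definition bracket :: "int \<Rightarrow> nat \<Rightarrow> nat" where
  "bracket a n = (if a mod int n = 0 then n else nat (a mod int n))"

text \<open>The j-th block (0-based) b'_(j+1) = (b_(1+nj), ..., b_(n+nj)).\<close>

definition block :: "nat \<Rightarrow> 'a vec \<Rightarrow> nat \<Rightarrow> 'a vec" where
  "block n b j = vec n (\<lambda>i. b $ (i + n * j))"

definition concat_vecs :: "'a vec list \<Rightarrow> 'a vec" where
  "concat_vecs vs = vec_of_list (concat (map list_of_vec vs))"

end

theory Submission imports Defs begin
lemma pow_mod_m: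
  fixes k :: int and m a n :: nat
  assumes "[k ^ m = 1] (mod int n)"
  shows "[k ^ a = k ^ (a mod m)] (mod int n)"
proof -
  have "k ^ a = k ^ (m * (a div m) + a mod m)" by simp
  also have "\<dots> = (k ^ m) ^ (a div m) * k ^ (a mod m)"
    by (simp only: power_add power_mult)
  finally have e: "k ^ a = (k ^ m) ^ (a div m) * k ^ (a mod m)" .
  have "[(k ^ m) ^ (a div m) = 1 ^ (a div m)] (mod int n)"
    by (rule cong_pow[OF assms])
  then have "[(k ^ m) ^ (a div m) * k ^ (a mod m) = 1 ^ (a div m) * k ^ (a mod m)] (mod int n)"
    by (rule cong_mult) (rule cong_refl)
  then show ?thesis using e by simp
qed

lemma mod_aux: "((a mod (n::int)) * K + c) mod n = (a * K + c) mod n"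
proof -
  have "((a mod n) * K + c) mod n = (((a mod n) * K) mod n + c) mod n" by (rule mod_add_left_eq[symmetric])
  also have "\<dots> = ((a * K) mod n + c) mod n" by (simp only: mod_mult_left_eq)
  also have "\<dots> = (a * K + c) mod n" by (rule mod_add_left_eq)
  finally show ?thesis .
qed

lemma G1_mult: "(i, j) \<otimes>\<^bsub>G1 n m k\<^esub> (i', j') = (nat ((int i * k ^ j' + int i') mod int n), (j + j') mod m)"
  by (simp add: G1_def)

lemma G1_carrier: "carrier (G1 n m k) = {(i, j). i < n \<and> j < m}"
  by (simp add: G1_def)

lemma G1_one: "\<one>\<^bsub>G1 n m k\<^esub> = (0, 0)"
  by (simp add: G1_def)

lemma G1_group:
  assumes n: "n \<ge> 1" and m: "m \<ge> 1" and km: "[k ^ m = 1] (mod int n)"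
  shows "group (G1 n m k)"
proof (rule groupI)
  have nn: "int n > 0" using n by simp
  fix x y assume "x \<in> carrier (G1 n m k)" "y \<in> carrier (G1 n m k)"
  then show "x \<otimes>\<^bsub>G1 n m k\<^esub> y \<in> carrier (G1 n m k)"
    using n m nn by (auto simp: G1_mult G1_carrier nat_less_iff)
next
  show "\<one>\<^bsub>G1 n m k\<^esub> \<in> carrier (G1 n m k)" using n m by (simp add: G1_one G1_carrier)
next
  fix x assume "x \<in> carrier (G1 n m k)"
  then show "\<one>\<^bsub>G1 n m k\<^esub> \<otimes>\<^bsub>G1 n m k\<^esub> x = x"
    by (auto simp: G1_one G1_mult G1_carrier)
next
  have nn: "int n > 0" using n by simp
  fix x y z assume "x \<in> carrier (G1 n m k)" "y \<in> carrier (G1 n m k)" "z \<in> carrier (G1 n m k)"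
  then obtain i j i' j' i'' j'' where x: "x = (i, j)" and y: "y = (i', j')" and z: "z = (i'', j'')"
    and lt: "j < m" "j' < m" "j'' < m"
    by (auto simp: G1_carrier)
  have c1: "[k ^ ((j' + j'') mod m) = k ^ (j' + j'')] (mod int n)"
    using pow_mod_m[OF km, of "j' + j''"] by (rule cong_sym)
  have e1: "(int i * k ^ j' + int i') * k ^ j'' + int i''
        = int i * k ^ (j' + j'') + (int i' * k ^ j'' + int i'')"
    by (simp add: power_add algebra_simps)
  have A: "[((int i * k ^ j' + int i') mod int n) * k ^ j'' + int i''
        = int i * k ^ (j' + j'') + (int i' * k ^ j'' + int i'')] (mod int n)"
    unfolding cong_def mod_aux e1 ..
  have "[int i * k ^ ((j' + j'') mod m) = int i * k ^ (j' + j'')] (mod int n)"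
    by (rule cong_mult[OF cong_refl c1])
  moreover have "[(int i' * k ^ j'' + int i'') mod int n = int i' * k ^ j'' + int i''] (mod int n)"
    by (simp add: cong_def)
  ultimately have B: "[int i * k ^ ((j' + j'') mod m) + (int i' * k ^ j'' + int i'') mod int n
        = int i * k ^ (j' + j'') + (int i' * k ^ j'' + int i'')] (mod int n)"
    by (rule cong_add)
  have "((int i * k ^ j' + int i') mod int n * k ^ j'' + int i'') mod int n
     = (int i * k ^ ((j' + j'') mod m) + (int i' * k ^ j'' + int i'') mod int n) mod int n"
    using cong_trans[OF A cong_sym[OF B]] by (simp add: cong_def)
  moreover have "((j + j') mod m + j'') mod m = (j + (j' + j'') mod m) mod m"
    by (simp add: mod_add_left_eq mod_add_right_eq add.assoc)
  ultimately show "x \<otimes>\<^bsub>G1 n m k\<^esub> y \<otimes>\<^bsub>G1 n m k\<^esub> z = x \<otimes>\<^bsub>G1 n m k\<^esub> (y \<otimes>\<^bsub>G1 n m k\<^esub> z)"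
    using nn by (simp add: x y z G1_mult)
next
  have nn: "int n > 0" using n by simp
  fix x assume "x \<in> carrier (G1 n m k)"
  then obtain i j where x: "x = (i, j)" and lt: "i < n" "j < m" by (auto simp: G1_carrier)
  define j' where "j' = (m - j) mod m"
  define i' where "i' = nat ((- int i * k ^ j') mod int n)"
  have ex: "[k ^ (j' + j) = 1] (mod int n)"
  proof (cases "j = 0")
    case True then show ?thesis by (simp add: j'_def)
  next
    case False then have "j' + j = m" using lt by (simp add: j'_def)
    then show ?thesis using km by simp
  qed
  have "int i' = (- int i * k ^ j') mod int n" unfolding i'_def using nn by simp
  then have "[int i' * k ^ j + int i = - int i * (k ^ (j' + j)) + int i] (mod int n)"
  proof -
    have "(int i' * k ^ j + int i) mod int n = ((- int i * k ^ j') * k ^ j + int i) mod int n"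
      unfolding \<open>int i' = _\<close> by (rule mod_aux)
    also have "(- int i * k ^ j') * k ^ j + int i = - int i * (k ^ (j' + j)) + int i"
      by (simp add: power_add)
    finally show ?thesis unfolding cong_def by simp
  qed
  also have "[- int i * (k ^ (j' + j)) + int i = - int i * 1 + int i] (mod int n)"
    by (rule cong_add[OF cong_mult[OF cong_refl ex] cong_refl])
  finally have "(int i' * k ^ j + int i) mod int n = 0" by (simp add: cong_def)
  moreover have "(j' + j) mod m = 0" using lt m
    by (cases "j = 0") (auto simp: j'_def)
  moreover have "i' < n" using nn by (simp add: i'_def nat_less_iff)
  moreover have "j' < m" using m by (simp add: j'_def)
  ultimately show "\<exists>y\<in>carrier (G1 n m k). y \<otimes>\<^bsub>G1 n m k\<^esub> x = \<one>\<^bsub>G1 n m k\<^esub>"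
    by (intro bexI[of _ "(i', j')"]) (auto simp: G1_carrier G1_mult G1_one x)
qed

lemma (in group) inv_cancel_aux:
  assumes "s \<in> carrier G" "x \<in> carrier G" "y \<in> carrier G"
  shows "inv (s \<otimes> x) \<otimes> (s \<otimes> y) = inv x \<otimes> y"
proof -
  have "inv (s \<otimes> x) \<otimes> (s \<otimes> y) = (inv x \<otimes> inv s) \<otimes> (s \<otimes> y)"
    using assms by (simp add: inv_mult_group)
  also have "\<dots> = inv x \<otimes> (inv s \<otimes> (s \<otimes> y))"
    using assms by (simp add: m_assoc)
  also have "inv s \<otimes> (s \<otimes> y) = y" using assms by (simp add: m_assoc[symmetric])
  finally show ?thesis .
qed

lemma row_space_entry:
  assumes "c \<in> carrier_vec N" "p < N"
  shows "(transpose_mat (group_ring_matrix G g N v) *\<^sub>v c) $ p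
       = (\<Sum>a\<in>{0..<N}. v (inv\<^bsub>G\<^esub> (g a) \<otimes>\<^bsub>G\<^esub> (g p)) * c $ a)"
  using assms by (simp add: group_ring_matrix_def scalar_prod_def)

lemma translate:
  fixes G (structure)
  assumes grp: "group G" and bij: "bij_betw g {..<N} (carrier G)" and s: "s \<in> carrier G"
    and b: "b \<in> row_space (group_ring_matrix G g N v)"
  shows "vec N (\<lambda>p. b $ the_inv_into {..<N} g (s \<otimes> g p)) \<in> row_space (group_ring_matrix G g N v)"
proof -
  interpret group G by fact
  define A where "A = group_ring_matrix G g N v"
  have dA: "dim_row A = N" by (simp add: A_def group_ring_matrix_def)
  obtain c where c: "c \<in> carrier_vec N" and bc: "b = transpose_mat A *\<^sub>v c"
    using b dA unfolding A_def[symmetric] row_space_def by auto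
  define \<iota> where "\<iota> = the_inv_into {..<N} g"
  define \<tau> where "\<tau> a = \<iota> (s \<otimes> g a)" for a
  have gc: "g a \<in> carrier G" if "a < N" for a using bij that by (auto simp: bij_betw_def)
  have \<iota>1: "\<iota> x < N" if "x \<in> carrier G" for x
    using bij that unfolding \<iota>_def by (metis bij_betw_imp_inj_on bij_betw_imp_surj_on lessThan_iff the_inv_into_into subsetI)
  have \<iota>2: "g (\<iota> x) = x" if "x \<in> carrier G" for x
    using bij that unfolding \<iota>_def by (simp add: f_the_inv_into_f_bij_betw)
  have \<iota>3: "\<iota> (g a) = a" if "a < N" for a
    using bij that unfolding \<iota>_def by (simp add: bij_betw_imp_inj_on the_inv_into_f_f)
  have \<tau>N: "\<tau> a < N" if "a < N" for a using that s gc \<iota>1 by (simp add: \<tau>_def)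
  have g\<tau>: "g (\<tau> a) = s \<otimes> g a" if "a < N" for a using that s gc \<iota>2 by (simp add: \<tau>_def)
  have bij\<tau>: "bij_betw \<tau> {0..<N} {0..<N}"
  proof (rule bij_betw_byWitness[where f' = "\<lambda>a. \<iota> (inv s \<otimes> g a)"])
    show "\<forall>a\<in>{0..<N}. \<iota> (inv s \<otimes> g (\<tau> a)) = a"
      using g\<tau> s gc \<iota>3 by (simp add: m_assoc[symmetric])
    show "\<forall>a\<in>{0..<N}. \<tau> (\<iota> (inv s \<otimes> g a)) = a"
      using s gc \<iota>1 \<iota>2 \<iota>3 by (simp add: \<tau>_def m_assoc[symmetric])
    show "\<tau> ` {0..<N} \<subseteq> {0..<N}" using \<tau>N by auto
    show "(\<lambda>a. \<iota> (inv s \<otimes> g a)) ` {0..<N} \<subseteq> {0..<N}" using s gc \<iota>1 by auto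
  qed
  define c' where "c' = vec N (\<lambda>a. c $ \<tau> a)"
  have c': "c' \<in> carrier_vec N" by (simp add: c'_def)
  have "vec N (\<lambda>p. b $ \<tau> p) = transpose_mat A *\<^sub>v c'"
  proof (rule eq_vecI)
    show "dim_vec (vec N (\<lambda>p. b $ \<tau> p)) = dim_vec (transpose_mat A *\<^sub>v c')"
      by (simp add: A_def group_ring_matrix_def)
    fix p assume "p < dim_vec (transpose_mat A *\<^sub>v c')"
    then have p: "p < N" by (simp add: A_def group_ring_matrix_def)
    have "vec N (\<lambda>p. b $ \<tau> p) $ p = b $ \<tau> p" using p by simp
    also have "\<dots> = (\<Sum>a\<in>{0..<N}. v (inv (g a) \<otimes> g (\<tau> p)) * c $ a)"
      unfolding bc A_def using c \<tau>N[OF p] by (rule row_space_entry)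
    also have "\<dots> = (\<Sum>a\<in>{0..<N}. v (inv (g (\<tau> a)) \<otimes> g (\<tau> p)) * c $ \<tau> a)"
      using sum.reindex_bij_betw[OF bij\<tau>, of "\<lambda>a. v (inv (g a) \<otimes> g (\<tau> p)) * c $ a"] by simp
    also have "\<dots> = (\<Sum>a\<in>{0..<N}. v (inv (g a) \<otimes> g p) * c' $ a)"
      by (rule sum.cong) (use p s gc g\<tau> in \<open>auto simp: c'_def inv_cancel_aux\<close>)
    also have "\<dots> = (transpose_mat A *\<^sub>v c') $ p"
      unfolding A_def using c' p by (rule row_space_entry[symmetric])
    finally show "vec N (\<lambda>p. b $ \<tau> p) $ p = (transpose_mat A *\<^sub>v c') $ p" .
  qed
  then show ?thesis using c' dA unfolding row_space_def A_def \<tau>_def \<iota>_def by auto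
qed

lemma G1_elem_bij:
  assumes n: "n \<ge> 1"
  shows "bij_betw (G1_elem n) {..<m * n} (carrier (G1 n m k))"
proof (rule bij_betw_byWitness[where f' = "\<lambda>(i, j). i + n * j"])
  show "\<forall>a\<in>{..<m * n}. (case G1_elem n a of (i, j) \<Rightarrow> i + n * j) = a"
    by (simp add: G1_elem_def)
  show "\<forall>a'\<in>carrier (G1 n m k). G1_elem n (case a' of (i, j) \<Rightarrow> i + n * j) = a'"
    using n by (auto simp: G1_elem_def G1_carrier)
  show "G1_elem n ` {..<m * n} \<subseteq> carrier (G1 n m k)"
    using n by (auto simp: G1_elem_def G1_carrier less_mult_imp_div_less)
  show "(\<lambda>(i, j). i + n * j) ` carrier (G1 n m k) \<subseteq> {..<m * n}"
  proof
    fix p assume "p \<in> (\<lambda>(i, j). i + n * j) ` carrier (G1 n m k)"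
    then obtain i j where "p = i + n * j" "i < n" "j < m" by (auto simp: G1_carrier)
    moreover have "i + n * j < n + n * j" using \<open>i < n\<close> by simp
    moreover have "n + n * j \<le> n * m" using \<open>j < m\<close>
      by (metis mult_Suc_right mult_le_mono2 Suc_leI)
    ultimately show "p \<in> {..<m * n}" by (simp add: mult.commute)
  qed
qed

lemma G1_elem_inv:
  assumes n: "n \<ge> 1" and "i < n" "j < m"
  shows "the_inv_into {..<m * n} (G1_elem n) (i, j) = i + n * j"
proof -
  have "i + n * j < m * n"
  proof -
    have "i + n * j < n + n * j" using \<open>i < n\<close> by simp
    moreover have "n + n * j \<le> n * m" using \<open>j < m\<close>
      by (metis mult_Suc_right mult_le_mono2 Suc_leI)
    ultimately show ?thesis by (simp add: mult.commute)
  qed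
  moreover have "G1_elem n (i + n * j) = (i, j)" using assms by (simp add: G1_elem_def)
  ultimately show ?thesis
    using G1_elem_bij[OF n, of m k]
    by (metis bij_betw_imp_inj_on lessThan_iff the_inv_into_f_f)
qed

lemma nth_concat_eq:
  assumes "\<forall>xs\<in>set xss. length xs = n" "p < length xss * n"
  shows "concat xss ! p = xss ! (p div n) ! (p mod n)"
  using assms
proof (induction xss arbitrary: p)
  case Nil then show ?case by simp
next
  case (Cons x xss)
  have lx: "length x = n" using Cons.prems by simp
  show ?case
  proof (cases "p < n")
    case True then show ?thesis using lx by (simp add: nth_append)
  next
    case False
    then have "p - n < length xss * n" using Cons.prems by simp
    then have "concat xss ! (p - n) = xss ! ((p - n) div n) ! ((p - n) mod n)"
      using Cons by simp
    moreover have "p div n = Suc ((p - n) div n)" "p mod n = (p - n) mod n"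
      using False lx Cons.prems by (auto intro: le_div_geq le_mod_geq)
    ultimately show ?thesis using lx False by (simp add: nth_append)
  qed
qed

lemma length_concat_eq:
  assumes "\<forall>xs\<in>set xss. length xs = n"
  shows "length (concat xss) = length xss * n"
  using assms by (induction xss) auto

lemma concat_vecs_eq:
  assumes "\<forall>w\<in>set vs. dim_vec w = n"
  shows "concat_vecs vs = vec (length vs * n) (\<lambda>p. (vs ! (p div n)) $ (p mod n))"
proof -
  let ?xss = "map list_of_vec vs"
  have l: "\<forall>xs\<in>set ?xss. length xs = n" using assms by auto
  show ?thesis
  proof (rule eq_vecI)
    show "dim_vec (concat_vecs vs) = dim_vec (vec (length vs * n) (\<lambda>p. vs ! (p div n) $ (p mod n)))"
      unfolding concat_vecs_def using length_concat_eq[OF l] by simp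
    fix p assume "p < dim_vec (vec (length vs * n) (\<lambda>p. vs ! (p div n) $ (p mod n)))"
    then have p: "p < length vs * n" by simp
    then have pn: "p div n < length vs" "p mod n < n"
      by (auto simp: less_mult_imp_div_less) (metis mod_less_divisor mult_0_right neq0_conv not_less0)
    have "concat_vecs vs $ p = concat ?xss ! p"
      unfolding concat_vecs_def by (rule vec_of_list_index)
    also have "\<dots> = ?xss ! (p div n) ! (p mod n)"
      using nth_concat_eq[OF l] p by simp
    also have "\<dots> = (vs ! (p div n)) $ (p mod n)"
      using pn assms by simp
    finally show "concat_vecs vs $ p = vec (length vs * n) (\<lambda>p. vs ! (p div n) $ (p mod n)) $ p"
      using p by simp
  qed
qed

lemma Tshift_nth:
  assumes "i < length xs"
  shows "Tshift xs ! i = xs ! ((i + length xs - 1) mod length xs)"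
proof (cases "i = 0")
  case True
  then show ?thesis using assms by (simp add: Tshift_def last_conv_nth)
next
  case False
  then have "(i + length xs - 1) mod length xs = ((i - 1) + length xs) mod length xs" by simp
  also have "\<dots> = i - 1" using assms by simp
  finally have "(i + length xs - 1) mod length xs = i - 1" .
  moreover have "xs \<noteq> []" using assms by auto
  ultimately show ?thesis using assms False by (simp add: Tshift_def nth_butlast nth_Cons')
qed

lemma length_Tshift: "length (Tshift xs) = length xs"
  by (simp add: Tshift_def)

lemma Tvec_eq:
  assumes "dim_vec c = n"
  shows "Tvec c = vec n (\<lambda>i. c $ ((i + n - 1) mod n))"
proof (rule eq_vecI)
  show "dim_vec (Tvec c) = dim_vec (vec n (\<lambda>i. c $ ((i + n - 1) mod n)))"
    using assms by (simp add: Tvec_def length_Tshift)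
  fix i assume "i < dim_vec (vec n (\<lambda>i. c $ ((i + n - 1) mod n)))"
  then have i: "i < n" by simp
  have "(i + n - 1) mod n < n" using i by simp
  then show "Tvec c $ i = vec n (\<lambda>i. c $ ((i + n - 1) mod n)) $ i"
    using assms i by (simp add: Tvec_def Tshift_nth length_Tshift vec_of_list_index)
qed

lemma Tvec_pow:
  assumes "dim_vec c = n" "n \<ge> 1"
  shows "(Tvec ^^ s) c = vec n (\<lambda>i. c $ nat ((int i - int s) mod int n))"
proof (induction s)
  case 0
  show ?case
  proof (rule eq_vecI)
    fix i assume "i < dim_vec (vec n (\<lambda>i. c $ nat ((int i - int 0) mod int n)))"
    then show "(Tvec ^^ 0) c $ i = vec n (\<lambda>i. c $ nat ((int i - int 0) mod int n)) $ i"
      using assms by simp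
  qed (use assms in simp)
next
  case (Suc s)
  have "(Tvec ^^ Suc s) c = Tvec (vec n (\<lambda>i. c $ nat ((int i - int s) mod int n)))"
    using Suc by simp
  also have "\<dots> = vec n (\<lambda>i. vec n (\<lambda>i. c $ nat ((int i - int s) mod int n)) $ ((i + n - 1) mod n))"
    by (rule Tvec_eq) simp
  also have "\<dots> = vec n (\<lambda>i. c $ nat ((int i - int (Suc s)) mod int n))"
  proof (rule eq_vecI)
    fix i assume "i < dim_vec (vec n (\<lambda>i. c $ nat ((int i - int (Suc s)) mod int n)))"
    then have i: "i < n" by simp
    have "int ((i + n - 1) mod n) = (int i + int n - 1) mod int n"
      using assms by (simp add: zmod_int of_nat_diff)
    then have "(int ((i + n - 1) mod n) - int s) mod int n = ((int i + int n - 1) - int s) mod int n"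
      by (simp add: mod_diff_left_eq)
    also have "\<dots> = ((int i - int (Suc s)) + int n) mod int n" by (simp add: algebra_simps)
    also have "\<dots> = (int i - int (Suc s)) mod int n" by simp
    finally show "vec n (\<lambda>i. vec n (\<lambda>i. c $ nat ((int i - int s) mod int n)) $ ((i + n - 1) mod n)) $ i =
         vec n (\<lambda>i. c $ nat ((int i - int (Suc s)) mod int n)) $ i"
      using i assms by simp
  qed simp
  finally show ?case .
qed

lemma bracket_mod:
  assumes "n \<ge> 1"
  shows "int (bracket a n) mod int n = a mod int n"
  using assms by (simp add: bracket_def)


theorem theorem3p1:
  fixes n m :: nat and k :: int
    and v :: "nat \<times> nat \<Rightarrow> 'a::{finite, field}"
    and b :: "'a vec"
  assumes "n \<ge> 1" and "m \<ge> 1"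
    and "[k ^ m = 1] (mod int n)"
    and "\<forall>t. 1 \<le> t \<and> t \<le> m - 1 \<longrightarrow> \<not> [k ^ t = 1] (mod int n)"
    and "b \<in> row_space (group_ring_matrix (G1 n m k) (G1_elem n) (m * n) v)"
  shows "concat_vecs (map (\<lambda>j. (Tvec ^^ bracket (k ^ j) n) (block n b j)) [0..<m])
           \<in> row_space (group_ring_matrix (G1 n m k) (G1_elem n) (m * n) v)
    \<and> concat_vecs (Tshift (map (block n b) [0..<m]))
           \<in> row_space (group_ring_matrix (G1 n m k) (G1_elem n) (m * n) v)"
proof -
  note n = assms(1) and m = assms(2) and km = assms(3) and b = assms(5)
  let ?G = "G1 n m k"
  let ?R = "row_space (group_ring_matrix (G1 n m k) (G1_elem n) (m * n) v)"
  let ?\<iota> = "the_inv_into {..<m * n} (G1_elem n)"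
  have grp: "group ?G" by (rule G1_group[OF n m km])
  have bij: "bij_betw (G1_elem n) {..<m * n} (carrier ?G)" by (rule G1_elem_bij[OF n])
  have nn: "int n > 0" using n by simp
  have pdiv: "p mod n < n" "p div n < m" if "p < m * n" for p
    using that n by (auto simp: less_mult_imp_div_less)
  have pe: "p mod n + n * (p div n) = p" for p by simp
  have blk: "\<forall>w\<in>set (map (block n b) [0..<m]). dim_vec w = n" by (auto simp: block_def)
  \<comment> \<open>first claim: left translation by y^-1\<close>
  define s1 where "s1 = (n - 1, 0::nat)"
  have s1: "s1 \<in> carrier ?G" using n m by (simp add: s1_def G1_carrier)
  have "concat_vecs (map (\<lambda>j. (Tvec ^^ bracket (k ^ j) n) (block n b j)) [0..<m])
     = vec (m * n) (\<lambda>p. b $ ?\<iota> (s1 \<otimes>\<^bsub>?G\<^esub> G1_elem n p))"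
  proof -
    have d: "\<forall>w\<in>set (map (\<lambda>j. (Tvec ^^ bracket (k ^ j) n) (block n b j)) [0..<m]). dim_vec w = n"
      using n by (auto simp: Tvec_pow block_def)
    show ?thesis
      unfolding concat_vecs_eq[OF d]
    proof (rule eq_vecI)
      fix p assume "p < dim_vec (vec (m * n) (\<lambda>p. b $ ?\<iota> (s1 \<otimes>\<^bsub>?G\<^esub> G1_elem n p)))"
      then have p: "p < m * n" by simp
      define i where "i = p mod n"
      define j where "j = p div n"
      have i: "i < n" and j: "j < m" using pdiv[OF p] by (simp_all add: i_def j_def)
      define r where "r = (int i - int (bracket (k ^ j) n)) mod int n"
      have r: "r = ((int n - 1) * k ^ j + int i) mod int n"
      proof -
        have "r = (int i - (int (bracket (k ^ j) n) mod int n)) mod int n"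
          unfolding r_def by (simp add: mod_diff_right_eq)
        also have "\<dots> = (int i - (k ^ j) mod int n) mod int n" by (simp add: bracket_mod[OF n])
        also have "\<dots> = (int i - k ^ j) mod int n" by (simp add: mod_diff_right_eq)
        also have "\<dots> = (int n * k ^ j + (int i - k ^ j)) mod int n" by simp
        also have "int n * k ^ j + (int i - k ^ j) = (int n - 1) * k ^ j + int i"
          by (simp add: algebra_simps)
        finally show ?thesis .
      qed
      have rlt: "nat r < n" using nn by (simp add: r_def nat_less_iff)
      have "vec (length (map (\<lambda>j. (Tvec ^^ bracket (k ^ j) n) (block n b j)) [0..<m]) * n)
              (\<lambda>p. map (\<lambda>j. (Tvec ^^ bracket (k ^ j) n) (block n b j)) [0..<m] ! (p div n) $ (p mod n)) $ p
          = ((Tvec ^^ bracket (k ^ j) n) (block n b j)) $ i"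
        using p j by (simp add: i_def j_def)
      also have "\<dots> = b $ (nat r + n * j)"
        using i rlt n by (simp add: Tvec_pow block_def r_def)
      also have "nat r + n * j = ?\<iota> (s1 \<otimes>\<^bsub>?G\<^esub> G1_elem n p)"
      proof -
        have "s1 \<otimes>\<^bsub>?G\<^esub> G1_elem n p = (nat r, j)"
          using j n by (simp add: s1_def G1_elem_def G1_mult i_def j_def r of_nat_diff)
        then show ?thesis using G1_elem_inv[OF n rlt j] by simp
      qed
      finally show "vec (length (map (\<lambda>j. (Tvec ^^ bracket (k ^ j) n) (block n b j)) [0..<m]) * n)
              (\<lambda>p. map (\<lambda>j. (Tvec ^^ bracket (k ^ j) n) (block n b j)) [0..<m] ! (p div n) $ (p mod n)) $ p
          = vec (m * n) (\<lambda>p. b $ ?\<iota> (s1 \<otimes>\<^bsub>?G\<^esub> G1_elem n p)) $ p"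
        using p by simp
    qed simp
  qed
  moreover have "vec (m * n) (\<lambda>p. b $ ?\<iota> (s1 \<otimes>\<^bsub>?G\<^esub> G1_elem n p)) \<in> ?R"
    by (rule translate[OF grp bij s1 b])
  moreover
  \<comment> \<open>second claim: left translation by x^-1\<close>
  define s2 where "s2 = (0::nat, m - 1)"
  have s2: "s2 \<in> carrier ?G" using n m by (simp add: s2_def G1_carrier)
  have "concat_vecs (Tshift (map (block n b) [0..<m]))
     = vec (m * n) (\<lambda>p. b $ ?\<iota> (s2 \<otimes>\<^bsub>?G\<^esub> G1_elem n p))"
  proof -
    have d: "\<forall>w\<in>set (Tshift (map (block n b) [0..<m])). dim_vec w = n"
    proof
      fix w assume "w \<in> set (Tshift (map (block n b) [0..<m]))"
      then have "w \<in> set (map (block n b) [0..<m])"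
        unfolding Tshift_def by (auto split: if_splits dest: in_set_butlastD simp del: set_map set_upt last_map)
      then show "dim_vec w = n" using blk by blast
    qed
    show ?thesis
      unfolding concat_vecs_eq[OF d]
    proof (rule eq_vecI)
      fix p assume "p < dim_vec (vec (m * n) (\<lambda>p. b $ ?\<iota> (s2 \<otimes>\<^bsub>?G\<^esub> G1_elem n p)))"
      then have p: "p < m * n" by simp
      define i where "i = p mod n"
      define j where "j = p div n"
      have i: "i < n" and j: "j < m" using pdiv[OF p] by (simp_all add: i_def j_def)
      define j' where "j' = (j + m - 1) mod m"
      have j': "j' < m" using m by (simp add: j'_def)
      have "vec (length (Tshift (map (block n b) [0..<m])) * n)
              (\<lambda>p. Tshift (map (block n b) [0..<m]) ! (p div n) $ (p mod n)) $ p
          = (map (block n b) [0..<m] ! j') $ i"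
        using p j by (simp add: i_def j_def j'_def length_Tshift Tshift_nth)
      also have "\<dots> = b $ (i + n * j')"
        using i j' by (simp add: block_def)
      also have "i + n * j' = ?\<iota> (s2 \<otimes>\<^bsub>?G\<^esub> G1_elem n p)"
      proof -
        have "s2 \<otimes>\<^bsub>?G\<^esub> G1_elem n p = (i, j')"
          using i m by (simp add: s2_def G1_elem_def G1_mult i_def j_def j'_def add.commute)
        then show ?thesis using G1_elem_inv[OF n i j'] by simp
      qed
      finally show "vec (length (Tshift (map (block n b) [0..<m])) * n)
              (\<lambda>p. Tshift (map (block n b) [0..<m]) ! (p div n) $ (p mod n)) $ p
          = vec (m * n) (\<lambda>p. b $ ?\<iota> (s2 \<otimes>\<^bsub>?G\<^esub> G1_elem n p)) $ p"
        using p by simp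
    qed (simp add: length_Tshift)
  qed
  moreover have "vec (m * n) (\<lambda>p. b $ ?\<iota> (s2 \<otimes>\<^bsub>?G\<^esub> G1_elem n p)) \<in> ?R"
    by (rule translate[OF grp bij s2 b])
  ultimately show ?thesis by simp
qed

end
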